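(* Let $f:\mathcal X\times\mathcal Y\to\{0,1\}$, let $\mu$ be a product distribution on $\mathcal X\times\mathcal Y$, let $\epsilon,\delta\in(0,1)$ and $D>0$ with $\mathrm{srec}^{0,\mu}_{\epsilon,\delta}(f)\le D$. Then for every $\rho\in(0,1)$ there is a rectangle $S$ with $\mu_1(S)\le\rho\,\mu_0(S)$ and $$\mu(S)\ge\mu_0(S)\ge\frac1D\left((1-\epsilon)\mu_0-\frac{\delta}{\rho}\mu_1\right).$$
   Context: A rectangle is $A\times B$ with $A\subseteq\mathcal X,B\subseteq\mathcal Y$; $\mu$ product means $\mu(x,y)=\mu_X(x)\mu_Y(y)$. $\mu_z(R)=\mu(R\cap f^{-1}(z))$, $\mu_z=\mu_z(\mathcal X\times\mathcal Y)$. $\mathrm{srec}^{z,\mu}_{\epsilon,\delta}(f)$ is the optimal value of: minimize $\sum_R w_R$ over $w_R\ge0$ (one per rectangle) subject to $\sum_{(x,y)\in f^{-1}(z)}\mu(x,y)\sum_{R\ni(x,y)}w_R\ge(1-\epsilon)\mu_z$; $\sum_{R\ni(x,y)}w_R\le\delta$ for all $(x,y)\notin f^{-1}(z)$; $\sum_{R\ni(x,y)}w_R\le1$ for all $(x,y)$. *)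

theory Defs
  imports "HOL-Analysis.Analysis"
begin

definition is_distr :: "('a::finite \<Rightarrow> real) \<Rightarrow> bool" where
  "is_distr p \<longleftrightarrow> (\<forall>a. 0 \<le> p a) \<and> (\<Sum>a\<in>UNIV. p a) = 1"

definition rectangles :: "('x \<times> 'y) set set" where
  "rectangles = {A \<times> B | A B. True}"

definition pmeas :: "('x::finite \<Rightarrow> real) \<Rightarrow> ('y::finite \<Rightarrow> real) \<Rightarrow> ('x \<times> 'y) set \<Rightarrow> real" where
  "pmeas muX muY S = (\<Sum>p\<in>S. muX (fst p) * muY (snd p))"

definition zmeas :: "('x::finite \<Rightarrow> 'y::finite \<Rightarrow> nat) \<Rightarrow> ('x \<Rightarrow> real) \<Rightarrow> ('y \<Rightarrow> real) \<Rightarrow> nat \<Rightarrow> ('x \<times> 'y) set \<Rightarrow> real" where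
  "zmeas f muX muY z R = pmeas muX muY (R \<inter> {p. f (fst p) (snd p) = z})"

definition cover :: "(('x::finite \<times> 'y::finite) set \<Rightarrow> real) \<Rightarrow> 'x \<times> 'y \<Rightarrow> real" where
  "cover w p = (\<Sum>R\<in>{R\<in>rectangles. p \<in> R}. w R)"

definition srec_feasible :: "nat \<Rightarrow> ('x::finite \<Rightarrow> real) \<Rightarrow> ('y::finite \<Rightarrow> real) \<Rightarrow> real \<Rightarrow> real \<Rightarrow>
     ('x \<Rightarrow> 'y \<Rightarrow> nat) \<Rightarrow> (('x \<times> 'y) set \<Rightarrow> real) \<Rightarrow> bool" where
  "srec_feasible z muX muY eps del f w \<longleftrightarrow>
     (\<forall>R\<in>rectangles. 0 \<le> w R) \<and>
     (\<Sum>p\<in>{p. f (fst p) (snd p) = z}. muX (fst p) * muY (snd p) * cover w p)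
        \<ge> (1 - eps) * zmeas f muX muY z UNIV \<and>
     (\<forall>p. f (fst p) (snd p) \<noteq> z \<longrightarrow> cover w p \<le> del) \<and>
     (\<forall>p. cover w p \<le> 1)"

text \<open>Optimal value of the LP (the LP is always feasible and bounded below by 0).\<close>
definition srec :: "nat \<Rightarrow> ('x::finite \<Rightarrow> real) \<Rightarrow> ('y::finite \<Rightarrow> real) \<Rightarrow> real \<Rightarrow> real \<Rightarrow>
     ('x \<Rightarrow> 'y \<Rightarrow> nat) \<Rightarrow> real" where
  "srec z muX muY eps del f =
     Inf {(\<Sum>R\<in>rectangles. w R) | w. srec_feasible z muX muY eps del f w}"

end

theory Submission
  imports Defs
begin

lemma swap_lemma:
  fixes w :: "'a set \<Rightarrow> real" and m :: "'a \<Rightarrow> real"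
  assumes "finite Rs" "finite A"
  shows "(\<Sum>R\<in>Rs. w R * (\<Sum>p\<in>R\<inter>A. m p)) = (\<Sum>p\<in>A. m p * (\<Sum>R\<in>{R\<in>Rs. p\<in>R}. w R))"
proof -
  have "(\<Sum>R\<in>Rs. w R * (\<Sum>p\<in>R\<inter>A. m p)) = (\<Sum>R\<in>Rs. \<Sum>p\<in>A. if p \<in> R then w R * m p else 0)"
  proof (rule sum.cong[OF refl])
    fix R
    have "R \<inter> A = {p\<in>A. p \<in> R}" by auto
    then show "w R * (\<Sum>p\<in>R\<inter>A. m p) = (\<Sum>p\<in>A. if p \<in> R then w R * m p else 0)"
      using assms by (simp add: sum.inter_filter sum_distrib_left if_distrib cong: if_cong)
  qed
  also have "\<dots> = (\<Sum>p\<in>A. \<Sum>R\<in>Rs. if p \<in> R then w R * m p else 0)" by (rule sum.swap)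
  also have "\<dots> = (\<Sum>p\<in>A. m p * (\<Sum>R\<in>{R\<in>Rs. p\<in>R}. w R))"
    using assms by (simp add: sum.inter_filter sum_distrib_left mult.commute if_distrib cong: if_cong)
  finally show ?thesis .
qed

lemma fin_rect: "finite (rectangles :: ('x::finite \<times> 'y::finite) set set)"
  by (rule finite_subset[OF subset_UNIV]) simp

theorem mainTheorem5:
  fixes f :: "'x::finite \<Rightarrow> 'y::finite \<Rightarrow> nat"
    and muX :: "'x \<Rightarrow> real" and muY :: "'y \<Rightarrow> real"
    and eps del D :: real
  assumes f01: "\<forall>x y. f x y \<in> {0, 1}"
    and distX: "is_distr muX" and distY: "is_distr muY"
    and eps: "0 < eps" "eps < 1"
    and del: "0 < del" "del < 1"
    and D: "0 < D"
    and bound: "srec 0 muX muY eps del f \<le> D"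
  shows "\<forall>rho. 0 < rho \<and> rho < 1 \<longrightarrow>
     (\<exists>S\<in>rectangles.
        zmeas f muX muY 1 S \<le> rho * zmeas f muX muY 0 S \<and>
        pmeas muX muY S \<ge> zmeas f muX muY 0 S \<and>
        zmeas f muX muY 0 S \<ge>
          (1 / D) * ((1 - eps) * zmeas f muX muY 0 UNIV - (del / rho) * zmeas f muX muY 1 UNIV))"
proof (intro allI impI)
  fix rho :: real
  assume rho: "0 < rho \<and> rho < 1"
  define mu where "mu = (\<lambda>p::'x\<times>'y. muX (fst p) * muY (snd p))"
  define A where "A = (\<lambda>z. {p::'x\<times>'y. f (fst p) (snd p) = z})"
  have mu_nn: "\<And>p. 0 \<le> mu p" using distX distY unfolding mu_def is_distr_def by simp
  have zm: "\<And>z R. zmeas f muX muY z R = (\<Sum>p\<in>R \<inter> A z. mu p)"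
    unfolding zmeas_def pmeas_def mu_def A_def by simp
  have zm_nn: "\<And>z R. 0 \<le> zmeas f muX muY z R" unfolding zm by (rule sum_nonneg) (simp add: mu_nn)
  define T where "T = (1 - eps) * zmeas f muX muY 0 UNIV - (del / rho) * zmeas f muX muY 1 UNIV"
  define G where "G = {R\<in>(rectangles :: ('x\<times>'y) set set). zmeas f muX muY 1 R \<le> rho * zmeas f muX muY 0 R}"
  have finG: "finite G" unfolding G_def using fin_rect by simp
  have emptyG: "{} \<in> G" unfolding G_def rectangles_def zm by auto
  define M where "M = Max (zmeas f muX muY 0 ` G)"
  have "M \<in> zmeas f muX muY 0 ` G" unfolding M_def using finG emptyG by (intro Max_in) auto
  then obtain S where S: "S \<in> G" "zmeas f muX muY 0 S = M" by auto
  have MG: "\<And>R. R \<in> G \<Longrightarrow> zmeas f muX muY 0 R \<le> M" unfolding M_def using finG by simp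
  have M_nn: "0 \<le> M" using S zm_nn by metis
  have key: "T \<le> M * (\<Sum>R\<in>rectangles. w R)" if feas: "srec_feasible 0 muX muY eps del f w" for w
  proof -
    from feas have wnn: "\<And>R. R \<in> rectangles \<Longrightarrow> 0 \<le> w R"
      and c0: "(\<Sum>p\<in>A 0. mu p * cover w p) \<ge> (1 - eps) * zmeas f muX muY 0 UNIV"
      and c1: "\<And>p. f (fst p) (snd p) \<noteq> 0 \<Longrightarrow> cover w p \<le> del"
      unfolding srec_feasible_def A_def mu_def by auto
    have sw: "\<And>z. (\<Sum>R\<in>rectangles. w R * zmeas f muX muY z R) = (\<Sum>p\<in>A z. mu p * cover w p)"
      unfolding zm cover_def by (rule swap_lemma[OF fin_rect]) simp
    have s1: "(\<Sum>p\<in>A 1. mu p * cover w p) \<le> del * zmeas f muX muY 1 UNIV"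
    proof -
      have "(\<Sum>p\<in>A 1. mu p * cover w p) \<le> (\<Sum>p\<in>A 1. mu p * del)"
        by (rule sum_mono) (auto intro!: mult_left_mono c1 mu_nn simp: A_def)
      also have "\<dots> = del * zmeas f muX muY 1 UNIV" unfolding zm by (simp add: sum_distrib_left mult.commute)
      finally show ?thesis .
    qed
    have "T \<le> (\<Sum>R\<in>rectangles. w R * zmeas f muX muY 0 R) - (1/rho) * (\<Sum>R\<in>rectangles. w R * zmeas f muX muY 1 R)"
      unfolding sw T_def using rho apply (simp add: divide_simps)
      using mult_right_mono[OF c0 less_imp_le[OF conjunct1[OF rho]]] s1[unfolded One_nat_def] by linarith
    also have "\<dots> = (\<Sum>R\<in>rectangles. w R * (zmeas f muX muY 0 R - zmeas f muX muY 1 R / rho))"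
      by (simp add: sum_distrib_left sum_subtractf algebra_simps)
    also have "\<dots> \<le> (\<Sum>R\<in>rectangles. w R * M)"
    proof (rule sum_mono)
      fix R :: "('x\<times>'y) set" assume R: "R \<in> rectangles"
      have "zmeas f muX muY 0 R - zmeas f muX muY 1 R / rho \<le> M"
      proof (cases "R \<in> G")
        case True
        then show ?thesis using MG[OF True] zm_nn[of 1 R] rho by (smt (verit) divide_nonneg_pos)
      next
        case False
        then have "zmeas f muX muY 1 R > rho * zmeas f muX muY 0 R" using R unfolding G_def by auto
        then have "zmeas f muX muY 1 R / rho > zmeas f muX muY 0 R" using rho by (simp add: field_simps)
        then show ?thesis using M_nn by linarith
      qed
      then show "w R * (zmeas f muX muY 0 R - zmeas f muX muY 1 R / rho) \<le> w R * M"
        using wnn[OF R] by (rule mult_left_mono)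
    qed
    also have "\<dots> = M * (\<Sum>R\<in>rectangles. w R)" by (simp add: sum_distrib_left mult.commute)
    finally show ?thesis .
  qed
  define w0 where "w0 = (\<lambda>R::('x\<times>'y) set. if \<exists>p. R = {p} \<and> p \<in> A 0 then 1 else (0::real))"
  have cov0: "cover w0 p = (if p \<in> A 0 then 1 else 0)" for p
  proof -
    have "cover w0 p = (\<Sum>R\<in>{R\<in>rectangles. p \<in> R}. if R = {p} then (if p \<in> A 0 then 1 else 0) else 0)"
      unfolding cover_def
    proof (rule sum.cong[OF refl])
      fix R assume "R \<in> {R \<in> rectangles. p \<in> R}"
      then have pR: "p \<in> R" by simp
      show "w0 R = (if R = {p} then (if p \<in> A 0 then 1 else 0) else 0)"
      proof (cases "\<exists>q. R = {q} \<and> q \<in> A 0")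
        case True
        then obtain q where "R = {q}" "q \<in> A 0" by blast
        with pR show ?thesis unfolding w0_def by auto
      next
        case False
        then have "w0 R = 0" unfolding w0_def by (simp only: if_False)
        moreover have "\<not> (R = {p} \<and> p \<in> A 0)" using False by blast
        ultimately show ?thesis by simp
      qed
    qed
    also have "\<dots> = (if p \<in> A 0 then 1 else 0)"
    proof -
      have "{p} \<in> {R\<in>rectangles. p \<in> R}" unfolding rectangles_def
        by (auto intro!: exI[of _ "{fst p}"] exI[of _ "{snd p}"])
      moreover have "finite {R\<in>(rectangles::('x\<times>'y) set set). p \<in> R}" using fin_rect by simp
      ultimately show ?thesis by (simp add: sum.delta)
    qed
    finally show ?thesis .
  qed
  have feas0: "srec_feasible 0 muX muY eps del f w0"
  proof -
    have "(\<Sum>p\<in>A 0. mu p * cover w0 p) = zmeas f muX muY 0 UNIV"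
      unfolding zm cov0 by simp
    moreover have "(1 - eps) * zmeas f muX muY 0 UNIV \<le> zmeas f muX muY 0 UNIV"
    proof -
      have "0 \<le> eps * zmeas f muX muY 0 UNIV" using eps zm_nn[of 0 UNIV] by simp
      then show ?thesis by (simp add: algebra_simps)
    qed
    ultimately have s: "(\<Sum>p\<in>{p. f (fst p) (snd p) = 0}. muX (fst p) * muY (snd p) * cover w0 p)
        \<ge> (1 - eps) * zmeas f muX muY 0 UNIV"
      unfolding A_def mu_def by simp
    have c1: "\<forall>p. f (fst p) (snd p) \<noteq> 0 \<longrightarrow> cover w0 p \<le> del"
      using del by (simp add: cov0 A_def)
    have c2: "\<forall>p. cover w0 p \<le> 1" by (simp add: cov0)
    have c3: "\<forall>R\<in>rectangles. 0 \<le> w0 R" by (simp add: w0_def)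
    show ?thesis unfolding srec_feasible_def using s c1 c2 c3 by blast
  qed
  define W where "W = {(\<Sum>R\<in>rectangles. w R) | w. srec_feasible 0 muX muY eps del f w}"
  have WI: "srec 0 muX muY eps del f = Inf W" unfolding srec_def W_def by simp
  have W0: "(\<Sum>R\<in>rectangles. w0 R) \<in> W" unfolding W_def using feas0 by blast
  have TMD: "T \<le> M * D"
  proof (cases "M = 0")
    case True
    then show ?thesis using key[OF feas0] by simp
  next
    case False
    with M_nn have Mp: "M > 0" by simp
    have "T / M \<le> Inf W"
    proof (rule cInf_greatest)
      show "W \<noteq> {}" using W0 by blast
      fix x assume "x \<in> W"
      then obtain w where "x = (\<Sum>R\<in>rectangles. w R)" "srec_feasible 0 muX muY eps del f w"
        unfolding W_def by blast
      then show "T / M \<le> x" using key Mp by (simp add: divide_simps mult.commute)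
    qed
    then have "T / M \<le> D" using bound WI by simp
    then show ?thesis using Mp by (simp add: divide_simps mult.commute)
  qed
  show "\<exists>S\<in>rectangles.
        zmeas f muX muY 1 S \<le> rho * zmeas f muX muY 0 S \<and>
        pmeas muX muY S \<ge> zmeas f muX muY 0 S \<and>
        zmeas f muX muY 0 S \<ge>
          (1 / D) * ((1 - eps) * zmeas f muX muY 0 UNIV - (del / rho) * zmeas f muX muY 1 UNIV)"
  proof (intro bexI conjI)
    show "S \<in> rectangles" "zmeas f muX muY 1 S \<le> rho * zmeas f muX muY 0 S"
      using S(1) unfolding G_def by auto
    show "zmeas f muX muY 0 S \<le> pmeas muX muY S"
      unfolding zmeas_def pmeas_def
      using distX distY unfolding is_distr_def
      by (intro sum_mono2) auto
    show "1 / D * ((1 - eps) * zmeas f muX muY 0 UNIV - del / rho * zmeas f muX muY 1 UNIV)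
          \<le> zmeas f muX muY 0 S"
      using TMD D S(2) unfolding T_def by (simp add: divide_simps mult.commute)
  qed
qed

end
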